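(* Let $F\subset\mathrm{Sym}^2(\mathbb{R}^n)$ be a cone subequation invariant under a subgroup of $\mathrm{O}(n)$ acting transitively on $S^{n-1}$, with Riesz characteristic $p$ ($1\le p<\infty$). Then $$F^{\min/2}_p\subset F\subset F^{\min/\max}_p,$$ where $F^{\min/\max}_p=\{A:\lambda_{\min}(A)+(p-1)\lambda_{\max}(A)\ge0\}$ and $F^{\min/2}_p=\{A:\lambda_{\min}(A)+(p-1)\lambda_2(A)\ge0\}$.
   Context: A cone subequation is a closed $F\subset\mathrm{Sym}^2(\mathbb{R}^n)$, $\emptyset\ne F\ne\mathrm{Sym}^2(\mathbb{R}^n)$, with $F+\{A\ge0\}\subset F$ and $tF\subset F$ for all $t\ge0$. Its Riesz characteristic is $p_F=\sup\{t:P_{e^\perp}-(t-1)P_e\in F\}$ for a (any) unit vector $e$, with $P_e,P_{e^\perp}$ the orthogonal projections onto $\mathbb{R}e$ and $e^\perp$. For $A\in\mathrm{Sym}^2(\mathbb{R}^n)$, $\lambda_1(A)\le\cdots\le\lambda_n(A)$ are its ordered eigenvalues, $\lambda_{\min}=\lambda_1$, $\lambda_{\max}=\lambda_n$. *)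

theory Defs
  imports "HOL-Analysis.Analysis" "HOL-Library.Multiset"
begin

type_synonym 'n sqmat = "real ^ 'n ^ 'n"

definition sym_mats :: "('n::finite) sqmat set" where
  "sym_mats = {A. transpose A = A}"

definition psd :: "('n::finite) sqmat \<Rightarrow> bool" where
  "psd A \<longleftrightarrow> transpose A = A \<and> (\<forall>x. 0 \<le> x \<bullet> (A *v x))"

definition cone_subequation :: "('n::finite) sqmat set \<Rightarrow> bool" where
  "cone_subequation F \<longleftrightarrow>
     F \<subseteq> sym_mats \<and> closed F \<and> F \<noteq> {} \<and> F \<noteq> sym_mats \<and>
     (\<forall>A\<in>F. \<forall>P. psd P \<longrightarrow> A + P \<in> F) \<and>
     (\<forall>A\<in>F. \<forall>t::real. t \<ge> 0 \<longrightarrow> t *\<^sub>R A \<in> F)"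

definition orthogonal_group :: "('n::finite) sqmat set" where
  "orthogonal_group = {g. orthogonal_matrix g}"

definition transitive_orth_subgroup :: "('n::finite) sqmat set \<Rightarrow> bool" where
  "transitive_orth_subgroup G \<longleftrightarrow>
     G \<subseteq> orthogonal_group \<and> mat 1 \<in> G \<and>
     (\<forall>g\<in>G. \<forall>h\<in>G. g ** h \<in> G) \<and> (\<forall>g\<in>G. transpose g \<in> G) \<and>
     (\<forall>x y. norm x = 1 \<longrightarrow> norm y = 1 \<longrightarrow> (\<exists>g\<in>G. g *v x = y))"

definition invariant_under :: "('n::finite) sqmat set \<Rightarrow> 'n sqmat set \<Rightarrow> bool" where
  "invariant_under G F \<longleftrightarrow> (\<forall>g\<in>G. \<forall>A\<in>F. g ** A ** transpose g \<in> F)"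

definition proj_line :: "real ^ ('n::finite) \<Rightarrow> 'n sqmat" where
  "proj_line e = (\<chi> i j. e $ i * e $ j)"

definition proj_perp :: "real ^ ('n::finite) \<Rightarrow> 'n sqmat" where
  "proj_perp e = mat 1 - proj_line e"

definition riesz_set :: "('n::finite) sqmat set \<Rightarrow> real ^ 'n \<Rightarrow> real set" where
  "riesz_set F e = {t. proj_perp e - (t - 1) *\<^sub>R proj_line e \<in> F}"

text \<open>Eigenvalues counted with (geometric = algebraic, for symmetric A) multiplicity,
  listed in increasing order; lam A k is the k-th one (1-based).\<close>
definition eigvals :: "('n::finite) sqmat \<Rightarrow> real set" where
  "eigvals A = {\<mu>. \<exists>x. x \<noteq> 0 \<and> A *v x = \<mu> *\<^sub>R x}"

definition eig_mult :: "('n::finite) sqmat \<Rightarrow> real \<Rightarrow> nat" where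
  "eig_mult A \<mu> = dim {x. A *v x = \<mu> *\<^sub>R x}"

definition eig_list :: "('n::finite) sqmat \<Rightarrow> real list" where
  "eig_list A = sorted_list_of_multiset
     (\<Sum>\<mu>\<in>eigvals A. replicate_mset (eig_mult A \<mu>) \<mu>)"

definition lam :: "('n::finite) sqmat \<Rightarrow> nat \<Rightarrow> real" where
  "lam A k = eig_list A ! (k - 1)"

definition lam_min :: "('n::finite) sqmat \<Rightarrow> real" where
  "lam_min A = lam A 1"

definition lam_max :: "('n::finite) sqmat \<Rightarrow> real" where
  "lam_max A = lam A CARD('n)"

definition F_min_max :: "real \<Rightarrow> ('n::finite) sqmat set" where
  "F_min_max p = {A\<in>sym_mats. lam_min A + (p - 1) * lam_max A \<ge> 0}"

definition F_min_2 :: "real \<Rightarrow> ('n::finite) sqmat set" where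
  "F_min_2 p = {A\<in>sym_mats. lam_min A + (p - 1) * lam A 2 \<ge> 0}"

end

theory Submission
  imports Defs
begin

lemma sym_inner:
  fixes A :: "real^'n^'n"
  assumes "transpose A = A"
  shows "x \<bullet> (A *v y) = (A *v x) \<bullet> y"
  by (metis assms dot_lmul_matrix vector_transpose_matrix)

lemma quad_expand:
  fixes A :: "real^'n^'n"
  assumes "transpose A = A"
  shows "(v + t *\<^sub>R y) \<bullet> (A *v (v + t *\<^sub>R y)) = v \<bullet> (A *v v) + 2 * t * (y \<bullet> (A *v v)) + t^2 * (y \<bullet> (A *v y))"
proof -
  have "v \<bullet> (A *v y) = y \<bullet> (A *v v)" using sym_inner[OF assms] by (simp add: inner_commute)
  then show ?thesis
    by (simp add: matrix_vector_right_distrib matrix_vector_mult_scaleR inner_add_left inner_add_right power2_eq_square algebra_simps)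
qed

lemma min_rayleigh:
  fixes A :: "real^'n^'n" and W :: "(real^'n) set"
  assumes symA: "transpose A = A" and sW: "subspace W" and ne: "W \<noteq> {0}"
    and inv: "\<And>x. x \<in> W \<Longrightarrow> A *v x \<in> W"
  shows "\<exists>v m. v \<in> W \<and> norm v = 1 \<and> A *v v = m *\<^sub>R v \<and> (\<forall>y\<in>W. m * (y \<bullet> y) \<le> y \<bullet> (A *v y))"
proof -
  define K where "K = W \<inter> sphere 0 1"
  have "compact K" unfolding K_def
    by (metis closed_subspace compact_Int_closed compact_sphere inf_commute sW)
  obtain x where x: "x \<in> W" "x \<noteq> 0" using ne sW subspace_0 by blast
  have "(1 / norm x) *\<^sub>R x \<in> K" unfolding K_def using x sW
    by (simp add: subspace_scale)
  then have "K \<noteq> {}" by blast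
  have "continuous_on K (\<lambda>x. x \<bullet> (A *v x))"
    by (intro continuous_intros continuous_on_id linear_continuous_on) auto
  then obtain v where v: "v \<in> K" and vmin: "\<And>y. y \<in> K \<Longrightarrow> v \<bullet> (A *v v) \<le> y \<bullet> (A *v y)"
    using continuous_attains_inf[OF \<open>compact K\<close> \<open>K \<noteq> {}\<close>] by blast
  define m where "m = v \<bullet> (A *v v)"
  have vW: "v \<in> W" and nv: "norm v = 1" using v by (auto simp: K_def)
  have vv: "v \<bullet> v = 1" using nv by (simp add: norm_eq_1)
  have bound: "m * (y \<bullet> y) \<le> y \<bullet> (A *v y)" if "y \<in> W" for y
  proof (cases "y = 0")
    case True then show ?thesis by simp
  next
    case False
    define z where "z = (1 / norm y) *\<^sub>R y"
    have "z \<in> K" unfolding K_def z_def using that False sW by (simp add: subspace_scale)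
    then have "m \<le> z \<bullet> (A *v z)" using vmin m_def by blast
    also have "z \<bullet> (A *v z) = (y \<bullet> (A *v y)) / (norm y)^2"
      by (simp add: z_def matrix_vector_mult_scaleR power2_eq_square)
    finally have "m * (norm y)^2 \<le> y \<bullet> (A *v y)" using False by (simp add: field_simps)
    then show ?thesis by (simp add: power2_norm_eq_inner)
  qed
  define w where "w = A *v v - m *\<^sub>R v"
  have wW: "w \<in> W" unfolding w_def using inv vW sW by (simp add: subspace_diff subspace_scale)
  define c where "c = w \<bullet> w"
  define d where "d = w \<bullet> (A *v w) - m * (w \<bullet> w)"
  have d0: "d \<ge> 0" using bound[OF wW] by (simp add: d_def)
  have key: "0 \<le> 2 * t * c + t^2 * d" for t
  proof -
    have "v + t *\<^sub>R w \<in> W" using vW wW sW by (simp add: subspace_add subspace_scale)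
    from bound[OF this] have b1: "m * ((v + t *\<^sub>R w) \<bullet> (v + t *\<^sub>R w)) \<le> (v + t *\<^sub>R w) \<bullet> (A *v (v + t *\<^sub>R w))" .
    have e1: "(v + t *\<^sub>R w) \<bullet> (v + t *\<^sub>R w) = 1 + 2 * t * (w \<bullet> v) + t^2 * c"
      using vv by (simp add: c_def inner_add_left inner_add_right power2_eq_square algebra_simps inner_commute)
    have e3: "w \<bullet> (A *v v) = c + m * (w \<bullet> v)"
      by (simp add: c_def w_def inner_diff_right algebra_simps)
    have e2: "(v + t *\<^sub>R w) \<bullet> (A *v (v + t *\<^sub>R w)) = m + 2 * t * (c + m * (w \<bullet> v)) + t^2 * (w \<bullet> (A *v w))"
      using quad_expand[OF symA, of v t w] e3 by (simp add: m_def)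
    have alg: "m*(1+2*t*a+t^2*c) \<le> m + 2*t*(c+m*a) + t^2*b \<Longrightarrow> 0 \<le> 2*t*c + t^2*(b - m*c)" for a b :: real
      by (simp add: algebra_simps)
    show ?thesis using alg[of "w \<bullet> v" "w \<bullet> (A *v w)"] b1 e1 e2 by (simp add: d_def c_def)
  qed
  have c0: "c \<ge> 0" by (simp add: c_def)
  have "c = 0"
  proof (rule ccontr)
    assume "c \<noteq> 0"
    then have cp: "c > 0" using c0 by simp
    define t where "t = - c / (d + 1)"
    have d1: "d + 1 > 0" using d0 by simp
    have ts: "t * (d + 1) = - c" using d1 by (simp add: t_def)
    have k: "0 \<le> 2 * t * c + t^2 * d" by (rule key)
    have "(d+1)^2 * (2*t*c+t^2*d) = 2*c*(d+1)*(t*(d+1)) + (t*(d+1))^2*d"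
      by (simp add: power2_eq_square algebra_simps)
    also have "\<dots> = - (c^2) * (d + 2)" unfolding ts by (simp add: power2_eq_square algebra_simps)
    finally have eq: "(d+1)^2 * (2*t*c+t^2*d) = - (c^2) * (d + 2)" .
    have "0 \<le> (d+1)^2 * (2*t*c+t^2*d)" using k by simp
    moreover have "- (c^2) * (d + 2) < 0" using cp d0 by (auto intro!: mult_neg_pos)
    ultimately show False using eq by linarith
  qed
  then have "w = 0" by (simp add: c_def)
  then have "A *v v = m *\<^sub>R v" by (simp add: w_def)
  then show ?thesis using vW nv bound by blast
qed

lemma transpose_uminus: "transpose (- A) = - transpose (A::real^'n^'n)"
  by (simp add: transpose_def vec_eq_iff)

lemma uminus_mv: "(- A) *v x = - (A *v (x::real^'n))"
  by (simp add: matrix_vector_mult_def vec_eq_iff sum_negf)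

lemma max_rayleigh:
  fixes A :: "real^'n^'n" and W :: "(real^'n) set"
  assumes symA: "transpose A = A" and sW: "subspace W" and ne: "W \<noteq> {0}"
    and inv: "\<And>x. x \<in> W \<Longrightarrow> A *v x \<in> W"
  shows "\<exists>v M. v \<in> W \<and> norm v = 1 \<and> A *v v = M *\<^sub>R v \<and> (\<forall>y\<in>W. y \<bullet> (A *v y) \<le> M * (y \<bullet> y))"
proof -
  have s: "transpose (- A) = - A" using symA by (simp add: transpose_uminus)
  have i: "(- A) *v x \<in> W" if "x \<in> W" for x
    using inv[OF that] sW by (simp add: uminus_mv subspace_neg)
  obtain v m where v: "v \<in> W" "norm v = 1" "(- A) *v v = m *\<^sub>R v"
     and b: "\<forall>y\<in>W. m * (y \<bullet> y) \<le> y \<bullet> ((- A) *v y)"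
    using min_rayleigh[OF s sW ne i] by blast
  have "A *v v = (- m) *\<^sub>R v" using v(3) by (simp add: uminus_mv) (metis minus_minus)
  moreover have "\<forall>y\<in>W. y \<bullet> (A *v y) \<le> (- m) * (y \<bullet> y)" using b by (simp add: uminus_mv) (smt (verit))
  ultimately show ?thesis using v by blast
qed

lemma eig_orth:
  fixes A :: "real^'n^'n"
  assumes "transpose A = A" "A *v x = \<mu> *\<^sub>R x" "A *v y = \<nu> *\<^sub>R y" "\<mu> \<noteq> \<nu>"
  shows "x \<bullet> y = 0"
proof -
  have "\<nu> * (x \<bullet> y) = x \<bullet> (A *v y)" using assms(3) by simp
  also have "\<dots> = (A *v x) \<bullet> y" by (rule sym_inner[OF assms(1)])
  also have "\<dots> = \<mu> * (x \<bullet> y)" using assms(2) by simp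
  finally show ?thesis using assms(4) by simp
qed

lemma eigvals_finite:
  fixes A :: "real^'n^'n"
  assumes symA: "transpose A = A"
  shows "finite (eigvals A)"
proof -
  define f where "f \<mu> = (SOME x. x \<noteq> 0 \<and> A *v x = \<mu> *\<^sub>R x)" for \<mu>
  have f: "f \<mu> \<noteq> 0 \<and> A *v f \<mu> = \<mu> *\<^sub>R f \<mu>" if "\<mu> \<in> eigvals A" for \<mu>
  proof -
    have "\<exists>x. x \<noteq> 0 \<and> A *v x = \<mu> *\<^sub>R x" using that unfolding eigvals_def by blast
    then show ?thesis unfolding f_def by (rule someI_ex)
  qed
  have inj: "inj_on f (eigvals A)"
  proof (rule inj_onI)
    fix \<mu> \<nu> assume a: "\<mu> \<in> eigvals A" "\<nu> \<in> eigvals A" "f \<mu> = f \<nu>"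
    then have "\<mu> *\<^sub>R f \<mu> = \<nu> *\<^sub>R f \<mu>" using f by metis
    then show "\<mu> = \<nu>" using f[OF a(1)] by (simp add: scaleR_cancel_right)
  qed
  have "pairwise orthogonal (f ` eigvals A)"
    unfolding pairwise_def orthogonal_def
    using f eig_orth[OF symA] by (metis imageE)
  moreover have "0 \<notin> f ` eigvals A" using f by auto
  ultimately have "independent (f ` eigvals A)" by (rule pairwise_orthogonal_independent)
  then have "finite (f ` eigvals A)" using independent_bound by blast
  then show ?thesis using inj finite_imageD by blast
qed

lemma eigspace_subspace: "subspace {x. (A::real^'n^'n) *v x = \<mu> *\<^sub>R x}"
  by (simp add: subspace_def matrix_vector_right_distrib matrix_vector_mult_scaleR algebra_simps)

lemma spectral_sum:
  fixes A :: "real^'n^'n"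
  assumes symA: "transpose A = A"
  shows "(\<Sum>\<mu>\<in>eigvals A. eig_mult A \<mu>) = CARD('n)"
proof -
  define E where "E \<mu> = {x. A *v x = \<mu> *\<^sub>R x}" for \<mu>
  have sE: "subspace (E \<mu>)" for \<mu> unfolding E_def by (rule eigspace_subspace)
  have "\<exists>B. B \<subseteq> E \<mu> \<and> pairwise orthogonal B \<and> (\<forall>x\<in>B. norm x = 1) \<and> independent B \<and> card B = dim (E \<mu>) \<and> span B = E \<mu>" for \<mu>
  proof -
    obtain B where "B \<subseteq> E \<mu>" "pairwise orthogonal B" "\<And>x. x \<in> B \<Longrightarrow> norm x = 1"
        "independent B" "card B = dim (E \<mu>)" "span B = E \<mu>"
      using orthonormal_basis_subspace[OF sE[of \<mu>]] by blast
    then show ?thesis by blast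
  qed
  then obtain B where B: "\<And>\<mu>. B \<mu> \<subseteq> E \<mu> \<and> pairwise orthogonal (B \<mu>) \<and> (\<forall>x\<in>B \<mu>. norm x = 1) \<and> independent (B \<mu>) \<and> card (B \<mu>) = dim (E \<mu>) \<and> span (B \<mu>) = E \<mu>"
    by metis
  define U where "U = \<Union>(B ` eigvals A)"
  have fin: "finite (eigvals A)" by (rule eigvals_finite[OF symA])
  have Bnz: "x \<noteq> 0" if "x \<in> B \<mu>" for x \<mu> using B that by force
  have Bfin: "finite (B \<mu>)" for \<mu> using B independent_bound by blast
  have BE: "A *v x = \<mu> *\<^sub>R x" if "x \<in> B \<mu>" for x \<mu> using B that unfolding E_def by blast
  have disj: "B \<mu> \<inter> B \<nu> = {}" if "\<mu> \<noteq> \<nu>" for \<mu> \<nu>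
  proof (rule ccontr)
    assume "B \<mu> \<inter> B \<nu> \<noteq> {}"
    then obtain x where x: "x \<in> B \<mu>" "x \<in> B \<nu>" by blast
    then have "\<mu> *\<^sub>R x = \<nu> *\<^sub>R x" using BE by metis
    then show False using that Bnz[OF x(1)] by (simp add: scaleR_cancel_right)
  qed
  have pw: "pairwise orthogonal U"
    unfolding pairwise_def U_def
  proof (intro ballI impI)
    fix x y assume x: "x \<in> \<Union>(B ` eigvals A)" and y: "y \<in> \<Union>(B ` eigvals A)" and xy: "x \<noteq> y"
    from x obtain \<mu> where xm: "x \<in> B \<mu>" by blast
    from y obtain \<nu> where yn: "y \<in> B \<nu>" by blast
    show "orthogonal x y"
    proof (cases "\<mu> = \<nu>")
      case True
      then show ?thesis using B[of \<mu>] xm yn xy unfolding pairwise_def by blast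
    next
      case False
      then show ?thesis using eig_orth[OF symA BE[OF xm] BE[OF yn]] by (simp add: orthogonal_def)
    qed
  qed
  have "0 \<notin> U" using Bnz unfolding U_def by blast
  then have indU: "independent U" using pw pairwise_orthogonal_independent by blast
  have cardU: "card U = (\<Sum>\<mu>\<in>eigvals A. eig_mult A \<mu>)"
  proof -
    have "card U = (\<Sum>\<mu>\<in>eigvals A. card (B \<mu>))"
      unfolding U_def using fin Bfin disj by (intro card_UN_disjoint) auto
    also have "\<dots> = (\<Sum>\<mu>\<in>eigvals A. eig_mult A \<mu>)"
      using B by (simp add: eig_mult_def E_def)
    finally show ?thesis .
  qed
  have EU: "E \<mu> \<subseteq> span U" if "\<mu> \<in> eigvals A" for \<mu>
  proof -
    have "B \<mu> \<subseteq> U" using that unfolding U_def by blast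
    then have "span (B \<mu>) \<subseteq> span U" by (rule span_mono)
    then show ?thesis using B by metis
  qed
  have invS: "A *v y \<in> span U" if "y \<in> span U" for y
  proof (rule span_induct[OF that, where P="\<lambda>y. A *v y \<in> span U"])
    show "subspace {y. A *v y \<in> span U}"
      by (simp add: subspace_def matrix_vector_right_distrib matrix_vector_mult_scaleR span_add span_scale span_zero)
  next
    fix x assume "x \<in> U"
    then obtain \<mu> where "x \<in> B \<mu>" unfolding U_def by blast
    then have "A *v x = \<mu> *\<^sub>R x" by (rule BE)
    then show "A *v x \<in> span U" using \<open>x \<in> U\<close> by (simp add: span_scale span_base)
  qed
  define W where "W = {y. \<forall>x \<in> span U. orthogonal x y}"
  have sW: "subspace W" unfolding W_def by (rule subspace_orthogonal_to_vectors)
  have invW: "A *v y \<in> W" if "y \<in> W" for y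
    unfolding W_def
  proof (intro CollectI ballI)
    fix x assume "x \<in> span U"
    then have "orthogonal (A *v x) y" using invS that unfolding W_def by blast
    then show "orthogonal x (A *v y)" using sym_inner[OF symA] by (simp add: orthogonal_def)
  qed
  have W0: "W = {0}"
  proof (rule ccontr)
    assume "W \<noteq> {0}"
    from min_rayleigh[OF symA sW this invW] obtain v m where
      v: "v \<in> W" "norm v = 1" "A *v v = m *\<^sub>R v" by blast
    have "v \<noteq> 0" using v by auto
    then have "m \<in> eigvals A" using v unfolding eigvals_def by blast
    then have "v \<in> span U" using EU v unfolding E_def by blast
    then have "orthogonal v v" using v unfolding W_def by blast
    then show False using \<open>v \<noteq> 0\<close> by (simp add: orthogonal_def)
  qed
  have spanU: "span U = UNIV"
  proof (rule set_eqI, rule iffI)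
    fix x :: "real^'n"
    obtain y z where yz: "y \<in> span U" "\<And>w. w \<in> span U \<Longrightarrow> orthogonal z w" "x = y + z"
      using orthogonal_subspace_decomp_exists[of U x] by blast
    have "z \<in> W" unfolding W_def using yz(2) orthogonal_commute by blast
    then have "z = 0" using W0 by blast
    then show "x \<in> span U" using yz by simp
  qed simp
  have "dim (span U) = card U" by (rule dim_span_eq_card_independent[OF indU])
  then have "card U = CARD('n)" using spanU by simp
  then show ?thesis using cardU by simp
qed

lemma eig_mult_ge:
  fixes A :: "real^'n^'n"
  assumes "S \<subseteq> {x. A *v x = \<mu> *\<^sub>R x}" "pairwise orthogonal S" "0 \<notin> S"
  shows "card S \<le> eig_mult A \<mu>"
  unfolding eig_mult_def
  by (rule independent_card_le_dim[OF assms(1) pairwise_orthogonal_independent[OF assms(2,3)]])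

lemma eig_mult_pos:
  fixes A :: "real^'n^'n"
  assumes "\<mu> \<in> eigvals A"
  shows "1 \<le> eig_mult A \<mu>"
proof -
  obtain x where "x \<noteq> 0" "A *v x = \<mu> *\<^sub>R x" using assms unfolding eigvals_def by blast
  then have "card {x} \<le> eig_mult A \<mu>"
    by (intro eig_mult_ge) (auto simp: pairwise_def)
  then show ?thesis by simp
qed

lemma eig_list_facts:
  fixes A :: "real^'n^'n"
  assumes symA: "transpose A = A"
  shows "length (eig_list A) = CARD('n)" "sorted (eig_list A)" "set (eig_list A) = eigvals A"
    "\<And>\<mu>. \<mu> \<in> eigvals A \<Longrightarrow> count (mset (eig_list A)) \<mu> = eig_mult A \<mu>"
proof -
  define M where "M = (\<Sum>\<mu>\<in>eigvals A. replicate_mset (eig_mult A \<mu>) \<mu>)"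
  have fin: "finite (eigvals A)" by (rule eigvals_finite[OF symA])
  have L: "eig_list A = sorted_list_of_multiset M" by (simp add: eig_list_def M_def)
  have "length (eig_list A) = size M" unfolding L by (metis mset_sorted_list_of_multiset size_mset)
  also have "size M = (\<Sum>\<mu>\<in>eigvals A. eig_mult A \<mu>)" by (simp add: M_def size_multiset_sum)
  also have "\<dots> = CARD('n)" by (rule spectral_sum[OF symA])
  finally show "length (eig_list A) = CARD('n)" .
  show "sorted (eig_list A)" by (simp add: eig_list_def)
  have "set (eig_list A) = set_mset M" unfolding L by simp
  also have "\<dots> = eigvals A"
    using eig_mult_pos[of _ A] by (auto simp: M_def set_mset_sum[OF fin] split: if_splits) fastforce
  finally show "set (eig_list A) = eigvals A" .
  fix \<mu> assume "\<mu> \<in> eigvals A"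
  then show "count (mset (eig_list A)) \<mu> = eig_mult A \<mu>"
    unfolding L by (simp add: M_def count_sum fin)
qed

lemma sorted_second:
  fixes L :: "real list"
  assumes "sorted L" "2 \<le> length L" "m \<in> set L" "m \<noteq> L!0 \<or> 2 \<le> count (mset L) (L!0)"
  shows "L!1 \<le> m"
proof -
  obtain a b r where L: "L = a # b # r" using assms(2)
    by (metis One_nat_def Suc_1 Suc_le_length_iff)
  have ab: "a \<le> b" and br: "\<forall>x\<in>set r. b \<le> x" using assms(1) unfolding L by auto
  show ?thesis
  proof (cases "m = a")
    case True
    then have "2 \<le> count (mset (a # b # r)) a" using assms(4) L by simp
    then have "a \<in> set (b # r)" by (simp split: if_splits)
    then show ?thesis using True br L by auto
  next
    case False
    then show ?thesis using assms(3) br L by auto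
  qed
qed

lemma lam_min_eq:
  fixes A :: "real^'n^'n"
  assumes symA: "transpose A = A" and a: "a \<in> eigvals A"
    and bound: "\<And>y. a * (y \<bullet> y) \<le> y \<bullet> (A *v y)"
  shows "lam_min A = a"
proof -
  define L where "L = eig_list A"
  note F = eig_list_facts[OF symA, folded L_def]
  have len: "0 < length L" using F(1) by simp
  have "L!0 \<in> eigvals A" using F(3) len nth_mem by metis
  then obtain u where u: "u \<noteq> 0" "A *v u = L!0 *\<^sub>R u" unfolding eigvals_def by blast
  have "a * (u \<bullet> u) \<le> L!0 * (u \<bullet> u)" using bound[of u] u by simp
  then have "a \<le> L!0" using u by simp
  moreover obtain j where "j < length L" "L!j = a" using a F(3) by (metis in_set_conv_nth)
  then have "L!0 \<le> a" using F(2) sorted_nth_mono by (metis le0)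
  ultimately show ?thesis by (simp add: lam_min_def lam_def L_def)
qed

lemma lam_max_eq:
  fixes A :: "real^'n^'n"
  assumes symA: "transpose A = A" and b: "b \<in> eigvals A"
    and bound: "\<And>y. y \<bullet> (A *v y) \<le> b * (y \<bullet> y)"
  shows "lam_max A = b"
proof -
  define L where "L = eig_list A"
  note F = eig_list_facts[OF symA, folded L_def]
  have len: "CARD('n) - 1 < length L" using F(1) by simp
  have "L!(CARD('n) - 1) \<in> eigvals A" using F(3) len nth_mem by metis
  then obtain u where u: "u \<noteq> 0" "A *v u = L!(CARD('n) - 1) *\<^sub>R u" unfolding eigvals_def by blast
  have "L!(CARD('n) - 1) * (u \<bullet> u) \<le> b * (u \<bullet> u)" using bound[of u] u by simp
  then have "L!(CARD('n) - 1) \<le> b" using u by simp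
  moreover obtain j where "j < length L" "L!j = b" using b F(3) by (metis in_set_conv_nth)
  then have "b \<le> L!(CARD('n) - 1)" using F(1,2) sorted_nth_mono len by (metis Suc_pred' less_Suc_eq_le zero_less_card_finite)
  ultimately show ?thesis by (simp add: lam_max_def lam_def L_def)
qed

lemma lam2_le:
  fixes A :: "real^'n^'n"
  assumes symA: "transpose A = A" and n2: "2 \<le> CARD('n)" and m: "m \<in> eigvals A"
    and c: "m \<noteq> lam_min A \<or> 2 \<le> eig_mult A (lam_min A)"
  shows "lam A 2 \<le> m"
proof -
  define L where "L = eig_list A"
  note F = eig_list_facts[OF symA, folded L_def]
  have l0: "lam_min A = L!0" by (simp add: lam_min_def lam_def L_def)
  have "L!0 \<in> eigvals A" using F(1,3) n2 nth_mem[of 0 L] by simp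
  then have "m \<noteq> L!0 \<or> 2 \<le> count (mset L) (L!0)" using c F(4) l0 by metis
  then have "L!1 \<le> m" using sorted_second[OF F(2)] F(1,3) n2 m by simp
  then show ?thesis by (simp add: lam_def L_def)
qed

lemma proj_line_mv: "proj_line u *v x = (u \<bullet> x) *\<^sub>R u"
  by (simp add: proj_line_def matrix_vector_mult_def vec_eq_iff inner_vec_def sum_distrib_left mult_ac)

lemma smult_mv: "(c *\<^sub>R M) *v x = c *\<^sub>R (M *v (x::real^'n))"
  by (simp add: matrix_vector_mult_def vec_eq_iff sum_distrib_left mult_ac)

lemma Q_mv: "(proj_perp u - (t - 1) *\<^sub>R proj_line u) *v x = x - (t * (u \<bullet> x)) *\<^sub>R u"
  by (simp add: proj_perp_def matrix_vector_mult_diff_rdistrib proj_line_mv smult_mv algebra_simps)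

lemma transpose_diff': "transpose (A - B) = transpose A - transpose (B::real^'n^'n)"
  by (simp add: transpose_def vec_eq_iff)

lemma transpose_Q: "transpose (proj_perp u - (t - 1) *\<^sub>R proj_line u) = proj_perp u - (t - 1) *\<^sub>R proj_line u"
  by (simp add: proj_perp_def proj_line_def transpose_def vec_eq_iff mat_def mult.commute)

lemma Q_form: "x \<bullet> ((proj_perp u - (t - 1) *\<^sub>R proj_line u) *v x) = x \<bullet> x - t * (u \<bullet> x)^2"
  by (simp add: Q_mv inner_diff_right power2_eq_square inner_commute)

lemma Q_zero: "proj_perp u - (0 - 1) *\<^sub>R proj_line u = mat 1"
  by (subst matrix_eq) (simp add: proj_perp_def matrix_vector_mult_add_rdistrib matrix_vector_mult_diff_rdistrib)

lemma mono_F: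
  fixes F :: "(real^'n^'n) set"
  assumes cF: "cone_subequation F" and A: "A \<in> F" and sB: "transpose B = B"
    and le: "\<And>x. x \<bullet> (A *v x) \<le> x \<bullet> (B *v x)"
  shows "B \<in> F"
proof -
  have sA: "transpose A = A" using cF A unfolding cone_subequation_def sym_mats_def by blast
  have "psd (B - A)" unfolding psd_def
    using sA sB le by (simp add: transpose_diff' matrix_vector_mult_diff_rdistrib inner_diff_right)
  then have "A + (B - A) \<in> F" using cF A unfolding cone_subequation_def by blast
  then show ?thesis by simp
qed

lemma scale_F:
  assumes "cone_subequation F" "A \<in> F" "0 \<le> t"
  shows "t *\<^sub>R A \<in> F"
  using assms unfolding cone_subequation_def by blast

lemma decomp:
  fixes A :: "real^'n^'n"
  assumes symA: "transpose A = A" and e: "e \<bullet> e = 1" and ae: "A *v e = a *\<^sub>R e"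
  shows "e \<bullet> (x - (e \<bullet> x) *\<^sub>R e) = 0"
    "(x - (e \<bullet> x) *\<^sub>R e) \<bullet> (x - (e \<bullet> x) *\<^sub>R e) = x \<bullet> x - (e \<bullet> x)^2"
    "x \<bullet> (A *v x) = a * (e \<bullet> x)^2 + (x - (e \<bullet> x) *\<^sub>R e) \<bullet> (A *v (x - (e \<bullet> x) *\<^sub>R e))"
proof -
  define c where "c = e \<bullet> x"
  define z where "z = x - c *\<^sub>R e"
  have ez: "e \<bullet> z = 0" using e by (simp add: z_def c_def inner_diff_right)
  then show "e \<bullet> (x - (e \<bullet> x) *\<^sub>R e) = 0" by (simp add: z_def c_def)
  have x: "x = c *\<^sub>R e + z" by (simp add: z_def)
  have "x \<bullet> x = c^2 + z \<bullet> z" 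
    by (subst (1 2) x) (simp add: inner_add_left inner_add_right e ez inner_commute power2_eq_square)
  then show "(x - (e \<bullet> x) *\<^sub>R e) \<bullet> (x - (e \<bullet> x) *\<^sub>R e) = x \<bullet> x - (e \<bullet> x)^2"
    by (simp add: z_def c_def)
  have eAz: "e \<bullet> (A *v z) = 0" using sym_inner[OF symA, of e z] ae ez by simp
  have "x \<bullet> (A *v x) = a * c^2 + z \<bullet> (A *v z)"
    by (subst (1 2) x) (simp add: matrix_vector_right_distrib matrix_vector_mult_scaleR ae
        inner_add_left inner_add_right e ez eAz inner_commute power2_eq_square)
  then show "x \<bullet> (A *v x) = a * (e \<bullet> x)^2 + (x - (e \<bullet> x) *\<^sub>R e) \<bullet> (A *v (x - (e \<bullet> x) *\<^sub>R e))"
    by (simp add: z_def c_def)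
qed

lemma transfer_Q:
  fixes F G :: "(real^'n^'n) set"
  assumes G: "transitive_orth_subgroup G" and inv: "invariant_under G F"
    and u: "norm u = 1" and w: "norm w = 1"
    and Q: "proj_perp u - (t - 1) *\<^sub>R proj_line u \<in> F"
  shows "proj_perp w - (t - 1) *\<^sub>R proj_line w \<in> F"
proof -
  obtain g where g: "g \<in> G" "g *v u = w" using G u w unfolding transitive_orth_subgroup_def by blast
  have og: "g ** transpose g = mat 1"
    using g G unfolding transitive_orth_subgroup_def orthogonal_group_def orthogonal_matrix_def by blast
  have "g ** (proj_perp u - (t - 1) *\<^sub>R proj_line u) ** transpose g = proj_perp w - (t - 1) *\<^sub>R proj_line w"
  proof (subst matrix_eq, intro allI)
    fix x
    have uu: "u \<bullet> (transpose g *v x) = w \<bullet> x"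
      by (metis g(2) dot_lmul_matrix transpose_matrix_vector transpose_transpose vector_transpose_matrix)
    have "(g ** (proj_perp u - (t - 1) *\<^sub>R proj_line u) ** transpose g) *v x
        = g *v ((proj_perp u - (t - 1) *\<^sub>R proj_line u) *v (transpose g *v x))"
      by (simp only: matrix_vector_mul_assoc matrix_mul_assoc)
    also have "\<dots> = g *v (transpose g *v x) - (t * (u \<bullet> (transpose g *v x))) *\<^sub>R (g *v u)"
      by (simp only: Q_mv matrix_vector_mult_diff_distrib matrix_vector_mult_scaleR)
    also have "\<dots> = (g ** transpose g) *v x - (t * (w \<bullet> x)) *\<^sub>R (g *v u)"
      by (simp only: uu matrix_vector_mul_assoc)
    also have "\<dots> = (proj_perp w - (t - 1) *\<^sub>R proj_line w) *v x"
      by (simp add: og g(2) Q_mv)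
    finally show "(g ** (proj_perp u - (t - 1) *\<^sub>R proj_line u) ** transpose g) *v x = (proj_perp w - (t - 1) *\<^sub>R proj_line w) *v x" .
  qed
  moreover have "g ** (proj_perp u - (t - 1) *\<^sub>R proj_line u) ** transpose g \<in> F"
    using inv g(1) Q unfolding invariant_under_def by blast
  ultimately show ?thesis by simp
qed

theorem lemmaA1:
  fixes F G :: "(real ^ 'n ^ 'n) set" and e :: "real ^ 'n" and p :: real
  assumes "CARD('n) \<ge> 2"
    and "cone_subequation F"
    and "transitive_orth_subgroup G"
    and "invariant_under G F"
    and "norm e = 1"
    and "bdd_above (riesz_set F e)"
    and "p = Sup (riesz_set F e)"
    and "1 \<le> p"
  shows "F_min_2 p \<subseteq> F \<and> F \<subseteq> F_min_max p"
proof -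
  note n2 = assms(1) and cF = assms(2) and G = assms(3) and inv = assms(4) and e = assms(5)
    and bdd = assms(6) and pdef = assms(7) and p1 = assms(8)
  define Q where "Q (u::real^'n) t = proj_perp u - (t - 1) *\<^sub>R proj_line u" for u t
  have Qf: "x \<bullet> (Q u t *v x) = x \<bullet> x - t * (u \<bullet> x)^2" for u t x
    unfolding Q_def by (rule Q_form)
  have Qs: "transpose (Q u t) = Q u t" for u t unfolding Q_def by (rule transpose_Q)
  have R: "riesz_set F e = {t. Q e t \<in> F}" by (simp add: riesz_set_def Q_def)
  have tr: "Q w t \<in> F" if "norm u = 1" "norm w = 1" "Q u t \<in> F" for u w t
    using transfer_Q[OF G inv that(1,2)] that(3) unfolding Q_def by blast
  have symF: "transpose A = A" if "A \<in> F" for A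
    using that cF unfolding cone_subequation_def sym_mats_def by blast
  have UNIV0: "(UNIV :: (real^'n) set) \<noteq> {0}" using e by auto
  obtain A0 where A0: "A0 \<in> F" using cF unfolding cone_subequation_def by blast
  obtain v0 M where M: "\<forall>y\<in>UNIV. y \<bullet> (A0 *v y) \<le> M * (y \<bullet> y)"
    using max_rayleigh[OF symF[OF A0] subspace_UNIV UNIV0] by blast
  define c where "c = max M 1"
  have cpos: "c > 0" by (simp add: c_def)
  have "c *\<^sub>R mat 1 \<in> F"
  proof (rule mono_F[OF cF A0])
    show "transpose (c *\<^sub>R (mat 1::real^'n^'n)) = c *\<^sub>R mat 1" by (simp add: transpose_scalar)
    fix x :: "real^'n"
    have "x \<bullet> (A0 *v x) \<le> M * (x \<bullet> x)" using M by blast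
    also have "\<dots> \<le> c * (x \<bullet> x)" by (simp add: c_def mult_right_mono)
    finally show "x \<bullet> (A0 *v x) \<le> x \<bullet> ((c *\<^sub>R mat 1) *v x)" by (simp add: smult_mv)
  qed
  from scale_F[OF cF this, of "1/c"] cpos have I: "mat 1 \<in> F" by simp
  have Z: "0 \<in> F" using scale_F[OF cF I, of 0] by simp
  have psdF: "B \<in> F" if "transpose B = B" "\<And>x. 0 \<le> x \<bullet> (B *v x)" for B
    using mono_F[OF cF Z that(1)] that(2) by simp
  have "0 \<in> riesz_set F e" unfolding R using I Q_zero[of e] by (simp add: Q_def)
  moreover have "closed (riesz_set F e)"
  proof -
    have "riesz_set F e = (\<lambda>t. Q e t) -` F" unfolding R by auto
    moreover have "continuous_on UNIV (\<lambda>t. Q e t)" unfolding Q_def by (intro continuous_intros)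
    ultimately show ?thesis using closed_vimage cF unfolding cone_subequation_def by metis
  qed
  ultimately have pR: "p \<in> riesz_set F e" using closed_contains_Sup bdd pdef by blast
  have le_p: "t \<le> p" if "norm u = 1" "Q u t \<in> F" for u t
  proof -
    have "Q e t \<in> F" using tr[OF that(1) e that(2)] .
    then have "t \<in> riesz_set F e" unfolding R by simp
    then show ?thesis using cSup_upper[OF _ bdd] pdef by simp
  qed
  have Qp: "Q u p \<in> F" if "norm u = 1" for u
    using tr[OF e that] pR unfolding R by simp
  show ?thesis
  proof
    show "F_min_2 p \<subseteq> F"
    proof
      fix A :: "real^'n^'n" assume A: "A \<in> F_min_2 p"
      then have symA: "transpose A = A" and hyp: "lam_min A + (p - 1) * lam A 2 \<ge> 0"
        unfolding F_min_2_def sym_mats_def by auto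
      obtain e1 a where e1: "norm e1 = 1" "A *v e1 = a *\<^sub>R e1" and ab: "\<forall>y\<in>UNIV. a * (y \<bullet> y) \<le> y \<bullet> (A *v y)"
        using min_rayleigh[OF symA subspace_UNIV UNIV0] by blast
      have ee: "e1 \<bullet> e1 = 1" using e1 by (simp add: norm_eq_1)
      have aE: "a \<in> eigvals A" using e1 unfolding eigvals_def by (intro CollectI exI[of _ e1]) auto
      have lmin: "lam_min A = a" using lam_min_eq[OF symA aE] ab by blast
      define W where "W = {y. \<forall>x\<in>{e1}. orthogonal x y}"
      have sW: "subspace W" unfolding W_def by (rule subspace_orthogonal_to_vectors)
      have W: "W = {y. e1 \<bullet> y = 0}" unfolding W_def orthogonal_def by simp
      have invW: "A *v y \<in> W" if "y \<in> W" for y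
        using that sym_inner[OF symA, of e1 y] e1(2) unfolding W by simp
      have W0: "W \<noteq> {0}"
      proof
        assume W0: "W = {0}"
        have "x \<in> span {e1}" for x
        proof -
          have "x - (e1 \<bullet> x) *\<^sub>R e1 \<in> W" unfolding W using decomp(1)[OF symA ee e1(2)] by simp
          then have "x = (e1 \<bullet> x) *\<^sub>R e1" using W0 by simp
          then show ?thesis by (metis span_base span_scale singletonI)
        qed
        then have "(UNIV::(real^'n) set) \<subseteq> span {e1}" by blast
        then have "dim (UNIV::(real^'n) set) \<le> card {e1}" using dim_le_card by blast
        then show False using n2 by simp
      qed
      obtain v m where v: "v \<in> W" "norm v = 1" "A *v v = m *\<^sub>R v" and mb: "\<forall>y\<in>W. m * (y \<bullet> y) \<le> y \<bullet> (A *v y)"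
        using min_rayleigh[OF symA sW W0 invW] by blast
      have mE: "m \<in> eigvals A" using v unfolding eigvals_def by (intro CollectI exI[of _ v]) auto
      have "m \<noteq> lam_min A \<or> 2 \<le> eig_mult A (lam_min A)"
      proof (cases "m = a")
        case True
        have ve: "e1 \<bullet> v = 0" using v W by simp
        have "e1 \<noteq> v" using ve ee by auto
        then have "card {e1, v} = 2" by simp
        moreover have "card {e1, v} \<le> eig_mult A a"
          using e1 v True ve by (intro eig_mult_ge) (auto simp: pairwise_def orthogonal_def inner_commute)
        ultimately show ?thesis using lmin by simp
      qed (use lmin in simp)
      from lam2_le[OF symA n2 mE this] have l2m: "lam A 2 \<le> m" .
      define l2 where "l2 = lam A 2"
      have hyp': "a + (p - 1) * l2 \<ge> 0" using hyp lmin l2_def by simp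
      have low: "a * (e1 \<bullet> x)^2 + m * (x \<bullet> x - (e1 \<bullet> x)^2) \<le> x \<bullet> (A *v x)" for x
      proof -
        define z where "z = x - (e1 \<bullet> x) *\<^sub>R e1"
        have "z \<in> W" unfolding W z_def using decomp(1)[OF symA ee e1(2)] by simp
        then have "m * (z \<bullet> z) \<le> z \<bullet> (A *v z)" using mb by blast
        then show ?thesis using decomp(2,3)[OF symA ee e1(2), of x] unfolding z_def by simp
      qed
      have zz: "0 \<le> x \<bullet> x - (e1 \<bullet> x)^2" for x
        using decomp(2)[OF symA ee e1(2), of x] inner_ge_zero[of "x - (e1 \<bullet> x) *\<^sub>R e1"] by simp
      show "A \<in> F"
      proof (cases "l2 \<le> 0")
        case True
        have "(p - 1) * l2 \<le> 0" using True p1 by (simp add: mult_nonneg_nonpos)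
        then have a0: "a \<ge> 0" using hyp' by linarith
        show ?thesis
        proof (rule psdF[OF symA])
          fix x
          have "a * (x \<bullet> x) \<le> x \<bullet> (A *v x)" using ab by blast
          moreover have "0 \<le> a * (x \<bullet> x)" using a0 by simp
          ultimately show "0 \<le> x \<bullet> (A *v x)" by linarith
        qed
      next
        case False
        then have l2p: "l2 > 0" by simp
        have "l2 *\<^sub>R Q e1 p \<in> F" using scale_F[OF cF Qp[OF e1(1)]] l2p by simp
        then show ?thesis
        proof (rule mono_F[OF cF _ symA])
          fix x
          define c where "c = (e1 \<bullet> x)^2"
          define s where "s = x \<bullet> x - c"
          have s0: "0 \<le> s" using zz by (simp add: s_def c_def)
          have c0: "0 \<le> c" by (simp add: c_def)
          have "x \<bullet> ((l2 *\<^sub>R Q e1 p) *v x) = l2 * (s + c - p * c)"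
            by (simp add: smult_mv Qf s_def c_def)
          also have "\<dots> = l2 * s + (-(p - 1) * l2) * c" by (simp add: algebra_simps)
          also have "\<dots> \<le> m * s + a * c"
          proof -
            have h1: "-(p - 1) * l2 \<le> a" using hyp' by linarith
            have h2: "l2 \<le> m" using l2m l2_def by simp
            show ?thesis using mult_right_mono[OF h1 c0] mult_right_mono[OF h2 s0] by linarith
          qed
          also have "\<dots> \<le> x \<bullet> (A *v x)" using low[of x] by (simp add: s_def c_def algebra_simps)
          finally show "x \<bullet> ((l2 *\<^sub>R Q e1 p) *v x) \<le> x \<bullet> (A *v x)" .
        qed
      qed
    qed
  next
    show "F \<subseteq> F_min_max p"
    proof
      fix A :: "real^'n^'n" assume AF: "A \<in> F"
      have symA: "transpose A = A" by (rule symF[OF AF])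
      obtain e1 a where e1: "norm e1 = 1" "A *v e1 = a *\<^sub>R e1" and ab: "\<forall>y\<in>UNIV. a * (y \<bullet> y) \<le> y \<bullet> (A *v y)"
        using min_rayleigh[OF symA subspace_UNIV UNIV0] by blast
      obtain f b where f: "norm f = 1" "A *v f = b *\<^sub>R f" and bb: "\<forall>y\<in>UNIV. y \<bullet> (A *v y) \<le> b * (y \<bullet> y)"
        using max_rayleigh[OF symA subspace_UNIV UNIV0] by blast
      have ee: "e1 \<bullet> e1 = 1" using e1 by (simp add: norm_eq_1)
      have aE: "a \<in> eigvals A" using e1 unfolding eigvals_def by (intro CollectI exI[of _ e1]) auto
      have bE: "b \<in> eigvals A" using f unfolding eigvals_def by (intro CollectI exI[of _ f]) auto
      have lmin: "lam_min A = a" using lam_min_eq[OF symA aE] ab by blast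
      have lmax: "lam_max A = b" using lam_max_eq[OF symA bE] bb by blast
      have "e1 \<bullet> (A *v e1) \<le> b * (e1 \<bullet> e1)" using bb by blast
      then have aleb: "a \<le> b" using e1(2) ee by simp
      have up: "x \<bullet> (A *v x) \<le> a * (e1 \<bullet> x)^2 + b * (x \<bullet> x - (e1 \<bullet> x)^2)" for x
      proof -
        define z where "z = x - (e1 \<bullet> x) *\<^sub>R e1"
        have "z \<bullet> (A *v z) \<le> b * (z \<bullet> z)" using bb by blast
        then show ?thesis using decomp(2,3)[OF symA ee e1(2), of x] unfolding z_def by simp
      qed
      have zz: "0 \<le> x \<bullet> x - (e1 \<bullet> x)^2" for x
        using decomp(2)[OF symA ee e1(2), of x] inner_ge_zero[of "x - (e1 \<bullet> x) *\<^sub>R e1"] by simp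
      have "a + (p - 1) * b \<ge> 0"
      proof (cases "b > 0")
        case True
        define t where "t = 1 - a / b"
        have "(1 / b) *\<^sub>R A \<in> F" using scale_F[OF cF AF] True by simp
        then have "Q e1 t \<in> F"
        proof (rule mono_F[OF cF _ Qs])
          fix x
          define c where "c = (e1 \<bullet> x)^2"
          define s where "s = x \<bullet> x - c"
          have "x \<bullet> (((1 / b) *\<^sub>R A) *v x) = (x \<bullet> (A *v x)) / b" by (simp add: smult_mv)
          also have "\<dots> \<le> (a * c + b * s) / b" using up[of x] True
            by (simp add: divide_right_mono c_def s_def)
          also have "\<dots> = x \<bullet> (Q e1 t *v x)" using True
            by (simp add: Qf t_def c_def s_def field_simps)
          finally show "x \<bullet> (((1 / b) *\<^sub>R A) *v x) \<le> x \<bullet> (Q e1 t *v x)" .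
        qed
        then have "t \<le> p" using le_p e1(1) by blast
        then have "1 - a / b \<le> p" by (simp add: t_def)
        then have "b - a \<le> p * b" using True by (simp add: field_simps)
        then show ?thesis by (simp add: algebra_simps)
      next
        case False
        then have b0: "b \<le> 0" by simp
        show ?thesis
        proof (cases "a \<ge> 0")
          case True
          then have "a = 0" "b = 0" using aleb b0 by auto
          then show ?thesis by simp
        next
          case False
          then have a0: "a < 0" by simp
          define s where "s = (p + 1) / (- a)"
          have s0: "s > 0" using a0 p1 by (simp add: s_def divide_pos_neg)
          have "s *\<^sub>R A \<in> F" using scale_F[OF cF AF] s0 by simp
          then have "Q e1 (p + 1) \<in> F"
          proof (rule mono_F[OF cF _ Qs])
            fix x
            define c where "c = (e1 \<bullet> x)^2"
            define r where "r = x \<bullet> x - c"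
            have r0: "0 \<le> r" using zz by (simp add: r_def c_def)
            have c0: "0 \<le> c" by (simp add: c_def)
            have "x \<bullet> ((s *\<^sub>R A) *v x) = s * (x \<bullet> (A *v x))" by (simp add: smult_mv)
            also have "\<dots> \<le> s * (a * c + b * r)" using up[of x] s0
              by (simp add: c_def r_def)
            also have "\<dots> \<le> s * (a * c)" using s0 b0 r0
              by (simp add: mult_nonpos_nonneg)
            also have "\<dots> = - (p + 1) * c" using a0 by (simp add: s_def field_simps)
            also have "\<dots> \<le> x \<bullet> (Q e1 (p + 1) *v x)" using r0 by (simp add: Qf r_def c_def algebra_simps)
            finally show "x \<bullet> ((s *\<^sub>R A) *v x) \<le> x \<bullet> (Q e1 (p + 1) *v x)" .
          qed
          then have "p + 1 \<le> p" using le_p e1(1) by blast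
          then show ?thesis by simp
        qed
      qed
      then show "A \<in> F_min_max p" using symA lmin lmax
        unfolding F_min_max_def sym_mats_def by simp
    qed
  qed
qed

end
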